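(* Consider the mechanism $\mathcal{M}_{sCA}$ for the $s$-CA problem, run under best-response dynamics with random player order in which every agent starts with the empty declaration, an agent chosen for update who cannot improve his utility keeps his previous declaration, and agents play undominated strategies (single-minded declarations $(S_i,t_i(S_i))$). Then at every step of the dynamics the submitted declaration profile is separated.
   Context: $s$-CA problem: $n$ agents, a set $M$ of $m$ items; an allocation is feasible if the allocated sets are pairwise disjoint and each has at most $s$ items. Agent $i$ has a private monotone valuation $t_i$ with $t_i(\emptyset)=0$. A single-minded declaration $(S,x)$ assigns $x$ to supersets of $S$ and $0$ otherwise. Mechanism $\mathcal{M}_{sCA}$: (1) replace each declaration $d_i$ by $(S_i,d_i(S_i))$ with $S_i\in\arg\max_S d_i(S)$ (ties to smaller sets); (2) run the greedy algorithm $\mathcal{A}_{sCA}$, which considers the declared sets in decreasing order of declared value and allocates a set of size at most $s$ to its bidder if it is disjoint from all previously allocated sets, obtaining tentative sets $T_1,\dots,T_n$; (3) for each $i$ with $T_i\ne\emptyset$, let $p_i=\sum_{j\ne i:\,S_j\cap T_i\ne\emptyset}d_j(S_j)$, and if $d_i(T_i)\le p_i$ set $T_i=\emptyset$; (4) allocate $T_1,\dots,T_n$ and charge each winner the critical price under this mechanism, i.e. the infimum value he could declare for his set and still receive it. Utility = true value minus payment. For a profile $\mathbf{d}$ of single-minded declarations $(S_j,d_j(S_j))$ and a set $T$, $R_i(\mathbf{d},T)=\{j\ne i: S_j\cap T\ne\emptyset\}$ and $Q_i(\mathbf{d},T)=\{j\in R_i(\mathbf{d},T): d_j(S_j)<t_i(T)\}$.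 $\mathbf{d}$ is separated for agent $i$ if $\sum_{j\in Q_i(\mathbf{d},S_i)}d_j(S_j)\le d_i(S_i)$, and separated if it is separated for every agent. Best-response dynamics with random player order: at each step one uniformly random agent may switch to a utility-maximizing declaration given the others' current declarations. *)

theory Defs
  imports Complex_Main "HOL-Library.Product_Lexorder"
begin

text \<open>A single-minded declaration (S, x): value x on supersets of S, 0 otherwise.
  Agents are 0..<n; a profile maps agents to declarations.\<close>

type_synonym 'm decl = "'m set \<times> real"
type_synonym 'm profile = "nat \<Rightarrow> 'm decl"

definition empty_decl :: "'m decl" where
  "empty_decl = ({}, 0)"

text \<open>Step (1): the argmax set of (S,x), ties broken towards smaller sets
  (for x > 0 this is S, for x = 0 every set attains the max and the smallest is the empty set).\<close>
definition eff :: "'m decl \<Rightarrow> 'm set" where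
  "eff d = (if snd d > 0 then fst d else {})"

definition greedy_order :: "nat \<Rightarrow> 'm profile \<Rightarrow> nat list" where
  "greedy_order n d = sort_key (\<lambda>j. (- snd (d j), j)) [0..<n]"

definition greedy_step :: "nat \<Rightarrow> 'm profile \<Rightarrow> nat \<Rightarrow> nat set \<Rightarrow> nat set" where
  "greedy_step s d j W =
     (if card (eff (d j)) \<le> s \<and> (\<forall>w\<in>W. eff (d w) \<inter> eff (d j) = {}) then insert j W else W)"

definition greedy_winners :: "nat \<Rightarrow> nat \<Rightarrow> 'm profile \<Rightarrow> nat set" where
  "greedy_winners n s d = fold (greedy_step s d) (greedy_order n d) {}"

definition tentative :: "nat \<Rightarrow> nat \<Rightarrow> 'm profile \<Rightarrow> nat \<Rightarrow> 'm set" where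
  "tentative n s d i = (if i \<in> greedy_winners n s d then eff (d i) else {})"

definition threshold :: "nat \<Rightarrow> nat \<Rightarrow> 'm profile \<Rightarrow> nat \<Rightarrow> real" where
  "threshold n s d i =
     (\<Sum>j\<in>{j\<in>{0..<n}. j \<noteq> i \<and> eff (d j) \<inter> tentative n s d i \<noteq> {}}. snd (d j))"

text \<open>Agent i receives a (non-empty) set: T_i \<noteq> {} and d_i(T_i) > p_i
  (note d_i(T_i) = x_i since T_i = S_i).\<close>
definition wins :: "nat \<Rightarrow> nat \<Rightarrow> 'm profile \<Rightarrow> nat \<Rightarrow> bool" where
  "wins n s d i = (tentative n s d i \<noteq> {} \<and> \<not> snd (d i) \<le> threshold n s d i)"

definition alloc :: "nat \<Rightarrow> nat \<Rightarrow> 'm profile \<Rightarrow> nat \<Rightarrow> 'm set" where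
  "alloc n s d i = (if wins n s d i then tentative n s d i else {})"

definition payment :: "nat \<Rightarrow> nat \<Rightarrow> 'm profile \<Rightarrow> nat \<Rightarrow> real" where
  "payment n s d i =
     (if wins n s d i then Inf {y. 0 \<le> y \<and> wins n s (d(i := (fst (d i), y))) i} else 0)"

definition utility ::
  "(nat \<Rightarrow> 'm set \<Rightarrow> real) \<Rightarrow> nat \<Rightarrow> nat \<Rightarrow> 'm profile \<Rightarrow> nat \<Rightarrow> real" where
  "utility t n s d i = t i (alloc n s d i) - payment n s d i"

definition R_set :: "nat \<Rightarrow> 'm profile \<Rightarrow> nat \<Rightarrow> 'm set \<Rightarrow> nat set" where
  "R_set n d i T = {j\<in>{0..<n}. j \<noteq> i \<and> fst (d j) \<inter> T \<noteq> {}}"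

definition Q_set ::
  "(nat \<Rightarrow> 'm set \<Rightarrow> real) \<Rightarrow> nat \<Rightarrow> 'm profile \<Rightarrow> nat \<Rightarrow> 'm set \<Rightarrow> nat set" where
  "Q_set t n d i T = {j\<in>R_set n d i T. snd (d j) < t i T}"

definition separated_for ::
  "(nat \<Rightarrow> 'm set \<Rightarrow> real) \<Rightarrow> nat \<Rightarrow> 'm profile \<Rightarrow> nat \<Rightarrow> bool" where
  "separated_for t n d i = ((\<Sum>j\<in>Q_set t n d i (fst (d i)). snd (d j)) \<le> snd (d i))"

definition separated :: "(nat \<Rightarrow> 'm set \<Rightarrow> real) \<Rightarrow> nat \<Rightarrow> 'm profile \<Rightarrow> bool" where
  "separated t n d = (\<forall>i<n. separated_for t n d i)"

definition undominated :: "'m set \<Rightarrow> (nat \<Rightarrow> 'm set \<Rightarrow> real) \<Rightarrow> nat \<Rightarrow> 'm decl set" where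
  "undominated M t i = {(S, t i S) | S. S \<subseteq> M}"

definition br_step ::
  "'m set \<Rightarrow> (nat \<Rightarrow> 'm set \<Rightarrow> real) \<Rightarrow> nat \<Rightarrow> nat \<Rightarrow> 'm profile \<Rightarrow> nat \<Rightarrow> 'm profile \<Rightarrow> bool" where
  "br_step M t n s d i d' =
     ((\<forall>j. j \<noteq> i \<longrightarrow> d' j = d j) \<and>
      (if \<exists>c\<in>undominated M t i. utility t n s (d(i := c)) i > utility t n s d i
       then d' i \<in> undominated M t i \<and>
            (\<forall>c\<in>undominated M t i. utility t n s (d(i := c)) i \<le> utility t n s d' i)
       else d' i = d i))"

end

theory Submission
  imports Defs
begin

definition truthful :: "'m set \<Rightarrow> (nat \<Rightarrow> 'm set \<Rightarrow> real) \<Rightarrow> nat \<Rightarrow> 'm profile \<Rightarrow> bool" where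
  "truthful M t n d = (\<forall>j<n. \<exists>S. S \<subseteq> M \<and> d j = (S, t j S))"

lemma truthful_nonneg:
  assumes "truthful M t n d" "\<forall>i<n. t i {} = 0"
    "\<forall>i<n. \<forall>A B. A \<subseteq> B \<longrightarrow> B \<subseteq> M \<longrightarrow> t i A \<le> t i B" "j < n"
  shows "0 \<le> snd (d j)"
proof -
  obtain S where "S \<subseteq> M" "d j = (S, t j S)" using assms(1,4) unfolding truthful_def by blast
  then show ?thesis using assms(2,3,4) by (metis empty_subsetI snd_conv)
qed

lemma tentative_ne:
  assumes "tentative n s d i \<noteq> {}"
  shows "0 < snd (d i)" "tentative n s d i = fst (d i)"
  using assms unfolding tentative_def eff_def by (auto split: if_splits)

lemma threshold_ge:
  assumes nn: "\<forall>j<n. 0 \<le> snd (d j)" and k: "k < n" "k \<noteq> i"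
    "fst (d k) \<inter> tentative n s d i \<noteq> {}" "0 < snd (d k)"
  shows "snd (d k) \<le> threshold n s d i"
proof -
  have "eff (d k) \<inter> tentative n s d i \<noteq> {}" using k unfolding eff_def by auto
  then show ?thesis unfolding threshold_def
    by (intro member_le_sum) (use k nn in auto)
qed

lemma util_nonneg:
  assumes tr: "truthful M t n d" and t0: "\<forall>i<n. t i {} = 0"
    and mono: "\<forall>i<n. \<forall>A B. A \<subseteq> B \<longrightarrow> B \<subseteq> M \<longrightarrow> t i A \<le> t i B" and i: "i < n"
  shows "0 \<le> utility t n s d i"
proof (cases "wins n s d i")
  case False
  then show ?thesis using t0 i unfolding utility_def alloc_def payment_def by simp
next
  case True
  obtain S where S: "S \<subseteq> M" "d i = (S, t i S)" using tr i unfolding truthful_def by blast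
  have x0: "0 \<le> snd (d i)" using truthful_nonneg[OF tr t0 mono i] .
  have tn: "tentative n s d i \<noteq> {}" using True unfolding wins_def by simp
  have al: "alloc n s d i = S" using True tentative_ne(2)[OF tn] S unfolding alloc_def by simp
  have "d(i := (fst (d i), snd (d i))) = d" by simp
  then have mem: "snd (d i) \<in> {y. 0 \<le> y \<and> wins n s (d(i := (fst (d i), y))) i}"
    using x0 True by simp
  have "Inf {y. 0 \<le> y \<and> wins n s (d(i := (fst (d i), y))) i} \<le> snd (d i)"
    by (rule cInf_lower[OF mem]) (auto intro: bdd_belowI[where m=0])
  then have "payment n s d i \<le> t i S" using True S unfolding payment_def by simp
  then show ?thesis unfolding utility_def al by simp
qed

lemma wins_of_pos:
  assumes "0 < utility t n s d i" "t i {} = 0"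
  shows "wins n s d i"
  using assms unfolding utility_def alloc_def payment_def by (auto split: if_splits)

lemma step_inv:
  assumes t0: "\<forall>i<n. t i {} = 0"
    and mono: "\<forall>i<n. \<forall>A B. A \<subseteq> B \<longrightarrow> B \<subseteq> M \<longrightarrow> t i A \<le> t i B"
    and i: "i < n"
    and tr: "truthful M t n d" and sep: "separated t n d"
    and br: "br_step M t n s d i d'"
  shows "truthful M t n d' \<and> separated t n d'"
proof (cases "\<exists>c\<in>undominated M t i. utility t n s (d(i := c)) i > utility t n s d i")
  case False
  then have "d' = d" using br unfolding br_step_def by (auto simp: fun_eq_iff)
  then show ?thesis using tr sep by simp
next
  case True
  have oth: "\<forall>j. j \<noteq> i \<longrightarrow> d' j = d j" using br unfolding br_step_def by simp
  have und: "d' i \<in> undominated M t i"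
    and best: "\<forall>c\<in>undominated M t i. utility t n s (d(i := c)) i \<le> utility t n s d' i"
    using br True unfolding br_step_def by auto
  have dd: "d' = d(i := d' i)" using oth by (auto simp: fun_eq_iff)
  obtain c where c: "c \<in> undominated M t i" "utility t n s (d(i := c)) i > utility t n s d i"
    using True by blast
  have "utility t n s d i \<ge> 0" using util_nonneg[OF tr t0 mono i] .
  moreover have "utility t n s (d(i := c)) i \<le> utility t n s d' i" using best c(1) by blast
  ultimately have "0 < utility t n s d' i" using c(2) by linarith
  then have w: "wins n s d' i" using wins_of_pos t0 i by blast
  have tr': "truthful M t n d'"
    unfolding truthful_def
  proof (intro allI impI)
    fix j assume j: "j < n"
    show "\<exists>S. S \<subseteq> M \<and> d' j = (S, t j S)"
    proof (cases "j = i")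
      case True then show ?thesis using und unfolding undominated_def by auto
    next
      case False then show ?thesis using tr j oth unfolding truthful_def by auto
    qed
  qed
  have nn': "\<forall>j<n. 0 \<le> snd (d' j)" using truthful_nonneg[OF tr' t0 mono] by blast
  have tn: "tentative n s d' i \<noteq> {}" using w unfolding wins_def by simp
  have tS: "tentative n s d' i = fst (d' i)" using tentative_ne(2)[OF tn] .
  have thr: "threshold n s d' i < snd (d' i)" using w unfolding wins_def by simp
  have xi: "snd (d' i) = t i (fst (d' i))" using und unfolding undominated_def by auto
  have sep': "separated_for t n d' k" if k: "k < n" for k
  proof (cases "k = i")
    case True
    let ?Q = "Q_set t n d' i (fst (d' i))"
    let ?P = "{j \<in> ?Q. 0 < snd (d' j)}"
    have fQ: "finite ?Q" unfolding Q_set_def R_set_def by auto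
    have "(\<Sum>j\<in>?Q. snd (d' j)) = (\<Sum>j\<in>?P. snd (d' j))"
      by (rule sum.mono_neutral_right) (use fQ nn' in \<open>auto simp: Q_set_def R_set_def\<close>)
    also have "\<dots> \<le> threshold n s d' i" unfolding threshold_def
      by (rule sum_mono2) (auto simp: Q_set_def R_set_def eff_def tS)
    finally show ?thesis using thr True unfolding separated_for_def by simp
  next
    case False
    have dk: "d' k = d k" using oth False by simp
    let ?Q' = "Q_set t n d' k (fst (d' k))"
    let ?Q = "Q_set t n d k (fst (d k))"
    have iQ: "i \<notin> ?Q'"
    proof
      assume a: "i \<in> ?Q'"
      then have ov: "fst (d' i) \<inter> fst (d' k) \<noteq> {}" and lt: "snd (d' i) < t k (fst (d' k))"
        unfolding Q_set_def R_set_def by auto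
      obtain S where S: "S \<subseteq> M" "d k = (S, t k S)" using tr k unfolding truthful_def by blast
      have "snd (d' k) = t k (fst (d' k))" using S dk by simp
      moreover have "0 \<le> snd (d' i)" using nn' i by simp
      ultimately have pos: "0 < snd (d' k)" and lt2: "snd (d' i) < snd (d' k)" using lt by auto
      have "snd (d' k) \<le> threshold n s d' i"
        by (rule threshold_ge[OF nn' k False]) (use ov tS pos in auto)
      then show False using thr lt2 by simp
    qed
    have sub: "?Q' \<subseteq> ?Q"
    proof
      fix j assume jq: "j \<in> ?Q'"
      then have "j \<noteq> i" using iQ by blast
      then have "d' j = d j" using oth by simp
      then show "j \<in> ?Q" using jq dk unfolding Q_set_def R_set_def by simp
    qed
    have fQ: "finite ?Q" unfolding Q_set_def R_set_def by auto
    have "(\<Sum>j\<in>?Q'. snd (d' j)) = (\<Sum>j\<in>?Q'. snd (d j))"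
      by (rule sum.cong) (use iQ oth in auto)
    also have "\<dots> \<le> (\<Sum>j\<in>?Q. snd (d j))"
      by (rule sum_mono2[OF fQ sub]) (use truthful_nonneg[OF tr t0 mono] in \<open>auto simp: Q_set_def R_set_def\<close>)
    also have "\<dots> \<le> snd (d k)" using sep k unfolding separated_def separated_for_def by simp
    finally show ?thesis unfolding separated_for_def dk by simp
  qed
  show ?thesis using tr' sep' unfolding separated_def by simp
qed

theorem lemma4p3:
  fixes M :: "'m set" and t :: "nat \<Rightarrow> 'm set \<Rightarrow> real" and n s :: nat
    and ord :: "nat \<Rightarrow> nat" and d :: "nat \<Rightarrow> 'm profile"
  assumes "finite M" and "1 \<le> s"
    and "\<forall>i<n. t i {} = 0"
    and "\<forall>i<n. \<forall>A B. A \<subseteq> B \<longrightarrow> B \<subseteq> M \<longrightarrow> t i A \<le> t i B"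
    and "\<forall>k. ord k < n"
    and "\<forall>i. d 0 i = empty_decl"
    and "\<forall>k. br_step M t n s (d k) (ord k) (d (Suc k))"
  shows "\<forall>k. separated t n (d k)"
proof
  fix k
  have "truthful M t n (d k) \<and> separated t n (d k)"
  proof (induction k)
    case 0
    have "truthful M t n (d 0)" using assms(3,6) unfolding truthful_def empty_decl_def by auto
    moreover have "separated t n (d 0)" using assms(6)
      unfolding separated_def separated_for_def empty_decl_def Q_set_def R_set_def by simp
    ultimately show ?case by simp
  next
    case (Suc k)
    then show ?case using step_inv[OF assms(3,4)] assms(5,7) by blast
  qed
  then show "separated t n (d k)" by simp
qed

end
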